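(* Let $r\ge1$, $\mu\in\mathcal P_r$ and $1\le s\le r$. For every $n\in\mathbb N$ let $\mathbf x_n\in\Xi_n$ minimize $\mathbf y\mapsto d_s(\delta^{\mathbf u_n}_{\mathbf y},\mu)$ over $\Xi_n$ (a best uniform $s$-approximation). Then $\lim_{n\to\infty}d_r(\delta^{\mathbf u_n}_{\mathbf x_n},\mu)=0$. In particular, $\lim_{n\to\infty}d_r(\delta^{\mathbf u_n}_{\mathbf x_n},\mu)=0$ for $x_{n,i}=F_\mu^{-1}\big(\tfrac{2i-1}{2n}\big)$, $1\le i\le n$.
   Context: $\mathcal P$ denotes the set of Borel probability measures on $\mathbb R$; $\mathcal P_r=\{\mu\in\mathcal P:\int|x|^r{\rm d}\mu(x)<\infty\}$. For $\mu\in\mathcal P$, $F_\mu(x)=\mu(]-\infty,x])$ and $F_\mu^{-1}(t)=\sup\{x: F_\mu(x)\le t\}$, $t\in]0,1[$. $d_r(\mu,\nu)=\big(\int_0^1|F_\mu^{-1}(t)-F_\nu^{-1}(t)|^r{\rm d}t\big)^{1/r}$. $\Xi_n=\{\mathbf x\in\mathbb R^n:x_1\le\dots\le x_n\}$, $\mathbf u_n=(1/n,\dots,1/n)$, $\delta^{\mathbf u_n}_{\mathbf x}=\frac1n\sum_{i=1}^n\delta_{x_i}$. *)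

theory Defs
  imports "HOL-Probability.Probability"
begin

definition cdf_of :: "real measure \<Rightarrow> real \<Rightarrow> real" where
  "cdf_of M x = measure M {..x}"

definition quantile :: "real measure \<Rightarrow> real \<Rightarrow> real" where
  "quantile M t = Sup {x. cdf_of M x \<le> t}"

definition dist_r :: "real \<Rightarrow> real measure \<Rightarrow> real measure \<Rightarrow> real" where
  "dist_r r M N =
     (LINT t:{0<..<1}|lborel. \<bar>quantile M t - quantile N t\<bar> powr r) powr (1 / r)"

definition unif_emp :: "nat \<Rightarrow> (nat \<Rightarrow> real) \<Rightarrow> real measure" where
  "unif_emp n x = measure_pmf (map_pmf x (pmf_of_set {1..n}))"

definition Xi :: "nat \<Rightarrow> (nat \<Rightarrow> real) set" where
  "Xi n = {x. \<forall>i j. 1 \<le> i \<longrightarrow> i \<le> j \<longrightarrow> j \<le> n \<longrightarrow> x i \<le> x j}"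

end

theory Submission
  imports Defs
begin


definition J :: "nat \<Rightarrow> nat \<Rightarrow> real set" where
  "J n i = (if i = 1 then {0<..<1/real n} else {real (i-1)/real n ..< real i/real n})"

lemma J_sub: "1 \<le> i \<Longrightarrow> i \<le> n \<Longrightarrow> J n i \<subseteq> {0<..<1}"
proof
  fix t assume i: "1 \<le> i" "i \<le> n" and t: "t \<in> J n i"
  have n: "real n \<ge> 1" using i by simp
  show "t \<in> {0<..<1}"
  proof (cases "i = 1")
    case True
    then show ?thesis using t n by (auto simp: J_def divide_le_eq_1 intro: order.strict_trans2)
  next
    case False
    then have "real i - 1 \<ge> 1" using i by simp
    then have a: "(real i - 1)/real n > 0" using n by simp
    have b: "real i / real n \<le> 1" using i n by simp
    have e: "real (i - Suc 0) = real i - 1" using i by simp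
    have "t \<in> {real (i-1)/real n ..< real i/real n}" using t False by (simp add: J_def)
    then have "(real i - 1)/real n \<le> t" "t < real i / real n" by (simp_all add: e)
    then show ?thesis using a b by auto
  qed
qed

lemma J_sets[measurable]: "J n i \<in> sets lborel"
  by (simp add: J_def)

lemma J_meas: "1 \<le> i \<Longrightarrow> 1 \<le> n \<Longrightarrow> measure lborel (J n i) = 1 / real n"
proof (cases "i = 1")
  case True assume "1 \<le> n" then show ?thesis using True by (simp add: J_def)
next
  case False assume "1 \<le> i" "1 \<le> n"
  then have "real (i-1) = real i - 1" by simp
  then show ?thesis using False \<open>1\<le>n\<close> by (simp add: J_def diff_divide_distrib)
qed

lemma J_mem:
  assumes t: "t \<in> {0<..<1}" and n: "1 \<le> n" and i: "1 \<le> i"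
  shows "t \<in> J n i \<longleftrightarrow> nat \<lfloor>real n * t\<rfloor> + 1 = i"
proof -
  have np: "real n > 0" using n by simp
  have ge: "real n * t \<ge> 0" using t by simp
  have "t \<in> J n i \<longleftrightarrow> real (i - 1) \<le> real n * t \<and> real n * t < real i"
  proof (cases "i = 1")
    case True then show ?thesis using t np by (auto simp: J_def field_simps)
  next
    case False then show ?thesis using np by (auto simp: J_def field_simps)
  qed
  also have "\<dots> \<longleftrightarrow> \<lfloor>real n * t\<rfloor> = int (i - 1)"
    using i by (auto simp: floor_eq_iff)
  also have "\<dots> \<longleftrightarrow> nat \<lfloor>real n * t\<rfloor> + 1 = i"
    using i ge by auto
  finally show ?thesis .
qed

lemma floor_range:
  assumes t: "t \<in> {0<..<1}" and n: "1 \<le> n"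
  shows "1 \<le> nat \<lfloor>real n * t\<rfloor> + 1" "nat \<lfloor>real n * t\<rfloor> + 1 \<le> n"
proof -
  have "real n * t < real n" using t n by simp
  then have "\<lfloor>real n * t\<rfloor> < int n" by (simp add: floor_less_iff)
  moreover have "0 \<le> \<lfloor>real n * t\<rfloor>" using t by simp
  ultimately have "nat \<lfloor>real n * t\<rfloor> < n" by (simp add: nat_less_iff)
  then show "nat \<lfloor>real n * t\<rfloor> + 1 \<le> n" by linarith
qed simp




lemma cdf_emp: "1 \<le> n \<Longrightarrow> cdf_of (unif_emp n v) y = real (card {i\<in>{1..n}. v i \<le> y}) / real n"
proof -
  assume n: "1 \<le> n"
  have "cdf_of (unif_emp n v) y = measure (measure_pmf (pmf_of_set {1..n})) (v -` {..y})"
    by (simp add: cdf_of_def unif_emp_def)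
  also have "\<dots> = real (card ({1..n} \<inter> v -` {..y})) / real (card {1..n})"
    using n by (subst measure_pmf_of_set) auto
  also have "{1..n} \<inter> v -` {..y} = {i\<in>{1..n}. v i \<le> y}" by auto
  finally show ?thesis by simp
qed

lemma quantile_emp:
  assumes n: "1 \<le> n" and v: "v \<in> Xi n" and t: "t \<in> {0<..<1}"
  shows "quantile (unif_emp n v) t = v (nat \<lfloor>real n * t\<rfloor> + 1)"
proof -
  define k where "k = nat \<lfloor>real n * t\<rfloor>"
  have k1: "k + 1 \<le> n" using floor_range[OF t n] by (simp add: k_def)
  have np: "real n > 0" using n by simp
  have kle: "real k \<le> real n * t" using t by (simp add: k_def)
  have kf: "real k = real_of_int \<lfloor>real n * t\<rfloor>" using t by (simp add: k_def)
  have klt: "real n * t < real k + 1" using kf real_of_int_floor_add_one_gt[of "real n * t"] by linarith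
  have vm: "\<And>a b. 1 \<le> a \<Longrightarrow> a \<le> b \<Longrightarrow> b \<le> n \<Longrightarrow> v a \<le> v b" using v by (auto simp: Xi_def)
  have "{y. cdf_of (unif_emp n v) y \<le> t} = {..< v (k+1)}"
  proof (intro set_eqI iffI)
    fix y assume "y \<in> {y. cdf_of (unif_emp n v) y \<le> t}"
    then have c: "real (card {i\<in>{1..n}. v i \<le> y}) \<le> real n * t"
      using np by (simp add: cdf_emp[OF n] divide_le_eq mult.commute)
    show "y \<in> {..< v (k+1)}"
    proof (rule ccontr)
      assume "y \<notin> {..< v (k+1)}"
      then have yv: "v (k+1) \<le> y" by simp
      have "{1..k+1} \<subseteq> {i\<in>{1..n}. v i \<le> y}"
      proof
        fix i assume "i \<in> {1..k+1}"
        then have "1 \<le> i" "i \<le> k+1" by auto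
        then show "i \<in> {i\<in>{1..n}. v i \<le> y}" using vm[of i "k+1"] k1 yv by auto
      qed
      then have "card {1..k+1} \<le> card {i\<in>{1..n}. v i \<le> y}" by (intro card_mono) auto
      then have "real k + 1 \<le> real (card {i\<in>{1..n}. v i \<le> y})" by simp
      then show False using c klt by linarith
    qed
  next
    fix y assume "y \<in> {..< v (k+1)}"
    then have yv: "y < v (k+1)" by simp
    have "{i\<in>{1..n}. v i \<le> y} \<subseteq> {1..k}"
    proof
      fix i assume i: "i \<in> {i\<in>{1..n}. v i \<le> y}"
      have "i \<le> k"
      proof (rule ccontr)
        assume "\<not> i \<le> k"
        then have "v (k+1) \<le> v i" using vm[of "k+1" i] i by auto
        then show False using i yv by auto
      qed
      then show "i \<in> {1..k}" using i by auto
    qed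
    then have "card {i\<in>{1..n}. v i \<le> y} \<le> card {1..k}" by (intro card_mono) auto
    then have "real (card {i\<in>{1..n}. v i \<le> y}) \<le> real n * t" using kle by simp
    then show "y \<in> {y. cdf_of (unif_emp n v) y \<le> t}"
      using np by (simp add: cdf_emp[OF n] divide_le_eq mult.commute)
  qed
  then show ?thesis by (simp add: quantile_def k_def)
qed




lemma pw_bound:
  fixes c u p r :: real
  assumes p: "0 < p" "p \<le> r"
  shows "\<bar>c - u\<bar> powr p \<le> 2 powr p * (\<bar>c\<bar> powr p + 1) + 2 powr p * \<bar>u\<bar> powr r"
proof -
  define m where "m = max \<bar>c\<bar> \<bar>u\<bar>"
  have "\<bar>c - u\<bar> \<le> 2 * m" unfolding m_def by linarith
  then have 1: "\<bar>c - u\<bar> powr p \<le> (2 * m) powr p" using p by (intro powr_mono2) auto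
  have 2: "(2 * m) powr p = 2 powr p * m powr p" unfolding m_def by (subst powr_mult) auto
  have 3: "m powr p \<le> \<bar>c\<bar> powr p + \<bar>u\<bar> powr p" unfolding m_def by (auto simp: max_def)
  have 4: "\<bar>u\<bar> powr p \<le> 1 + \<bar>u\<bar> powr r"
  proof (cases "\<bar>u\<bar> \<le> 1")
    case True
    then have "\<bar>u\<bar> powr p \<le> 1" using p by (intro powr_le1) auto
    moreover have "0 \<le> \<bar>u\<bar> powr r" by simp
    ultimately show ?thesis by linarith
  next
    case False
    then have "\<bar>u\<bar> powr p \<le> \<bar>u\<bar> powr r" using p by (intro powr_mono) auto
    then show ?thesis by linarith
  qed
  have "m powr p \<le> (\<bar>c\<bar> powr p + 1) + \<bar>u\<bar> powr r" using 3 4 by linarith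
  then have "2 powr p * m powr p \<le> 2 powr p * ((\<bar>c\<bar> powr p + 1) + \<bar>u\<bar> powr r)"
    by (intro mult_left_mono) auto
  then show ?thesis using 1 2 by (simp add: distrib_left)
qed

lemma sbm:
  fixes h :: "real \<Rightarrow> real"
  assumes "h \<in> borel_measurable (restrict_space lborel A)" "A \<in> sets lborel" "B \<in> sets lborel" "B \<subseteq> A"
  shows "set_borel_measurable lborel B h"
proof -
  have "(\<lambda>x. indicator A x *\<^sub>R h x) \<in> borel_measurable lborel"
    using assms(1,2) by (subst (asm) borel_measurable_restrict_space_iff) auto
  then have "(\<lambda>x. indicator B x * (indicator A x *\<^sub>R h x)) \<in> borel_measurable lborel"
    using assms(3) by (intro borel_measurable_times) (auto intro: borel_measurable_indicator)
  moreover have "(\<lambda>x. indicator B x * (indicator A x *\<^sub>R h x)) = (\<lambda>x. indicator B x *\<^sub>R h x)"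
    using assms(4) by (intro ext) (auto split: split_indicator)
  ultimately show ?thesis unfolding set_borel_measurable_def by simp
qed

lemma Qm_gen:
  fixes Q :: "real \<Rightarrow> real"
  assumes mono: "mono_on {0<..<1} Q"
  shows "Q \<in> borel_measurable (restrict_space lborel {0<..<1::real})"
proof -
  have h: "Q \<in> borel_measurable (restrict_space borel {0<..<1})"
    using borel_measurable_mono_on_fnc[OF mono] .
  have e: "sets (restrict_space lborel {0<..<1::real}) = sets (restrict_space borel {0<..<1})"
    by (simp only: sets_restrict_space sets_lborel)
  show ?thesis unfolding measurable_cong_sets[OF e refl] by (rule h)
qed

locale QS =
  fixes Q :: "real \<Rightarrow> real" and r :: real
  assumes mono: "mono_on {0<..<1} Q" and r1: "1 \<le> r"
    and intQ: "set_integrable lborel {0<..<1} (\<lambda>t. \<bar>Q t\<bar> powr r)"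
begin

lemma Qm: "Q \<in> borel_measurable (restrict_space lborel {0<..<1})"
proof -
  have h: "Q \<in> borel_measurable (restrict_space borel {0<..<1})"
    using borel_measurable_mono_on_fnc[OF mono] .
  have e: "sets (restrict_space lborel {0<..<1::real}) = sets (restrict_space borel {0<..<1})"
    by (simp only: sets_restrict_space sets_lborel)
  show ?thesis unfolding measurable_cong_sets[OF e refl] by (rule h)
qed

lemma comp_int:
  fixes g :: "real \<Rightarrow> real"
  assumes g: "g \<in> borel_measurable borel" and bd: "\<And>u. \<bar>g u\<bar> \<le> C + D * \<bar>u\<bar> powr r"
    and B: "B \<in> sets lborel" "B \<subseteq> {0<..<1}"
  shows "set_integrable lborel B (\<lambda>t. g (Q t))"
proof (rule set_integrable_bound)
  have "emeasure lborel B \<le> emeasure lborel {0<..<1::real}" using B by (intro emeasure_mono) auto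
  then have fin: "emeasure lborel B < \<infinity>" by (simp add: le_less_trans)
  have "set_integrable lborel B (\<lambda>t. C)"
    unfolding set_integrable_def using fin
    by (intro integrable_scaleR_left integrable_real_indicator) (use B in auto)
  moreover have "set_integrable lborel B (\<lambda>t. D * \<bar>Q t\<bar> powr r)"
    using set_integrable_subset[OF intQ B] by auto
  ultimately show "set_integrable lborel B (\<lambda>t. C + D * \<bar>Q t\<bar> powr r)" by auto
  have "(\<lambda>t. g (Q t)) \<in> borel_measurable (restrict_space lborel {0<..<1})"
    using measurable_compose[OF Qm g] by simp
  then show "set_borel_measurable lborel B (\<lambda>t. g (Q t))"
    by (rule sbm) (use B in auto)
  show "AE x in lborel. x \<in> B \<longrightarrow> norm (g (Q x)) \<le> norm (C + D * \<bar>Q x\<bar> powr r)"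
    using bd by (auto intro: order.trans[OF _ abs_ge_self])
qed

lemma int_const:
  assumes "0 < p" "p \<le> r" "B \<in> sets lborel" "B \<subseteq> {0<..<1}"
  shows "set_integrable lborel B (\<lambda>t. \<bar>c - Q t\<bar> powr p)"
proof (rule comp_int[of "\<lambda>u. \<bar>c - u\<bar> powr p" "2 powr p * (\<bar>c\<bar> powr p + 1)" "2 powr p" B])
  show "(\<lambda>u. \<bar>c - u\<bar> powr p) \<in> borel_measurable borel" by measurable
  show "\<bar>\<bar>c - u\<bar> powr p\<bar> \<le> 2 powr p * (\<bar>c\<bar> powr p + 1) + 2 powr p * \<bar>u\<bar> powr r" for u
    using pw_bound[OF assms(1,2), of c u] by simp
qed (use assms in auto)

end



lemma split_int:
  fixes f :: "nat \<Rightarrow> real \<Rightarrow> real" and F :: "real \<Rightarrow> real"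
  assumes n: "1 \<le> n" and int: "\<And>i. 1 \<le> i \<Longrightarrow> i \<le> n \<Longrightarrow> set_integrable lborel (J n i) (f i)"
    and F: "\<And>t. t \<in> {0<..<1} \<Longrightarrow> F t = f (nat \<lfloor>real n * t\<rfloor> + 1) t"
  shows "set_integrable lborel {0<..<1} F"
    "(LINT t:{0<..<1}|lborel. F t) = (\<Sum>i=1..n. LINT t:J n i|lborel. f i t)"
proof -
  have eq: "(\<lambda>t. indicator {0<..<1} t *\<^sub>R F t) = (\<lambda>t. \<Sum>i=1..n. indicator (J n i) t *\<^sub>R f i t)"
  proof
    fix t :: real
    show "indicator {0<..<1} t *\<^sub>R F t = (\<Sum>i=1..n. indicator (J n i) t *\<^sub>R f i t)"
    proof (cases "t \<in> {0<..<1}")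
      case True
      define k where "k = nat \<lfloor>real n * t\<rfloor> + 1"
      have k: "k \<in> {1..n}" using floor_range[OF True n] by (simp add: k_def)
      have "(\<Sum>i=1..n. indicator (J n i) t *\<^sub>R f i t) = (\<Sum>i=1..n. if i = k then f i t else 0)"
      proof (rule sum.cong)
        fix i assume "i \<in> {1..n}"
        then show "indicator (J n i) t *\<^sub>R f i t = (if i = k then f i t else 0)"
          using J_mem[OF True n, of i] by (auto simp: k_def indicator_def)
      qed simp
      also have "\<dots> = f k t" using k by simp
      finally show ?thesis using True F by (simp add: k_def)
    next
      case False
      have "indicator (J n i) t = (0::real)" if "i \<in> {1..n}" for i
        using J_sub[of i n] that False by (auto simp: indicator_def)
      then show ?thesis using False by simp
    qed
  qed
  have ii: "\<And>i. i \<in> {1..n} \<Longrightarrow> integrable lborel (\<lambda>t. indicator (J n i) t *\<^sub>R f i t)"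
    using int unfolding set_integrable_def by auto
  show "set_integrable lborel {0<..<1} F" unfolding set_integrable_def eq
    using ii by (intro Bochner_Integration.integrable_sum) auto
  show "(LINT t:{0<..<1}|lborel. F t) = (\<Sum>i=1..n. LINT t:J n i|lborel. f i t)"
    unfolding set_lebesgue_integral_def eq
    using ii by (intro Bochner_Integration.integral_sum) auto
qed

context QS begin

lemma bridge:
  assumes n: "1 \<le> n" and v: "v \<in> Xi n" and p: "0 < p" "p \<le> r"
  shows "(LINT t:{0<..<1}|lborel. \<bar>quantile (unif_emp n v) t - Q t\<bar> powr p)
          = (\<Sum>i=1..n. LINT t:J n i|lborel. \<bar>v i - Q t\<bar> powr p)"
proof (rule split_int(2)[OF n, where f="\<lambda>i t. \<bar>v i - Q t\<bar> powr p"])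
  fix i assume "1 \<le> i" "i \<le> n"
  then show "set_integrable lborel (J n i) (\<lambda>t. \<bar>v i - Q t\<bar> powr p)"
    using J_sub[of i n] p J_sets[of n i] by (intro int_const) auto
qed (simp add: quantile_emp[OF n v])

end

lemma nonint_zero:
  fixes Q :: "real \<Rightarrow> real"
  assumes mono: "mono_on {0<..<1} Q" and r: "1 \<le> r"
    and ni: "\<not> set_integrable lborel {0<..<1} (\<lambda>t. \<bar>Q t\<bar> powr r)"
    and n: "1 \<le> n" and v: "v \<in> Xi n"
  shows "(LINT t:{0<..<1}|lborel. \<bar>quantile (unif_emp n v) t - Q t\<bar> powr r) = 0"
proof (rule ccontr)
  let ?G = "\<lambda>t. \<bar>quantile (unif_emp n v) t - Q t\<bar> powr r"
  assume "(LINT t:{0<..<1}|lborel. ?G t) \<noteq> 0"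
  then have iG: "set_integrable lborel {0<..<1} ?G"
    unfolding set_lebesgue_integral_def set_integrable_def using not_integrable_integral_eq by blast
  define S where "S = (\<Sum>i=1..n. \<bar>v i\<bar> powr r)"
  have cst: "set_integrable lborel {0<..<1::real} (\<lambda>t. 2 powr r * (S + 1))"
    unfolding set_integrable_def
    by (intro integrable_scaleR_left integrable_real_indicator) auto
  have "set_integrable lborel {0<..<1} (\<lambda>t. \<bar>Q t\<bar> powr r)"
  proof (rule set_integrable_bound)
    show "set_integrable lborel {0<..<1} (\<lambda>t. 2 powr r * (S + 1) + 2 powr r * ?G t)"
      using cst iG by auto
    have "(\<lambda>t. \<bar>Q t\<bar> powr r) \<in> borel_measurable (restrict_space lborel {0<..<1})"
      using measurable_compose[OF Qm_gen[OF mono], of "\<lambda>u. \<bar>u\<bar> powr r"] by measurable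
    then show "set_borel_measurable lborel {0<..<1} (\<lambda>t. \<bar>Q t\<bar> powr r)"
      by (rule sbm) auto
    show "AE t in lborel. t \<in> {0<..<1} \<longrightarrow> norm (\<bar>Q t\<bar> powr r) \<le> norm (2 powr r * (S + 1) + 2 powr r * ?G t)"
    proof (rule AE_I2, rule impI)
      fix t :: real assume t: "t \<in> {0<..<1}"
      define k where "k = nat \<lfloor>real n * t\<rfloor> + 1"
      have k: "k \<in> {1..n}" using floor_range[OF t n] by (simp add: k_def)
      have q: "quantile (unif_emp n v) t = v k" using quantile_emp[OF n v t] by (simp add: k_def)
      have "\<bar>v k - (v k - Q t)\<bar> powr r \<le> 2 powr r * (\<bar>v k\<bar> powr r + 1) + 2 powr r * \<bar>v k - Q t\<bar> powr r"
        by (rule pw_bound) (use r in auto)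
      moreover have "\<bar>v k\<bar> powr r \<le> S" unfolding S_def
        using k by (intro member_le_sum) auto
      ultimately have "\<bar>Q t\<bar> powr r \<le> 2 powr r * (S + 1) + 2 powr r * ?G t"
        unfolding q by (smt (verit) mult_left_mono powr_ge_zero)
      moreover have "0 \<le> 2 powr r * (S + 1) + 2 powr r * ?G t" 
        unfolding S_def by (intro add_nonneg_nonneg mult_nonneg_nonneg sum_nonneg) auto
      ultimately show "norm (\<bar>Q t\<bar> powr r) \<le> norm (2 powr r * (S + 1) + 2 powr r * ?G t)" by simp
    qed
  qed
  then show False using ni by simp
qed




lemma superadd:
  fixes a e s :: real
  assumes a: "0 \<le> a" and e: "0 \<le> e" and s: "1 \<le> s"
  shows "a powr s + e powr s \<le> (a + e) powr s"
proof (cases "a + e = 0")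
  case True then have "a = 0" "e = 0" using a e by auto
  then show ?thesis by simp
next
  case False
  then have ae: "a + e > 0" using a e by simp
  have "(a + e) powr s = (a + e) powr (s - 1) * (a + e)"
    using ae by (simp add: powr_diff)
  also have "\<dots> = (a + e) powr (s - 1) * a + (a + e) powr (s - 1) * e" by (simp add: distrib_left)
  also have "a powr s \<le> (a + e) powr (s - 1) * a"
  proof (cases "a = 0")
    case True then show ?thesis using s by simp
  next
    case False
    then have "a powr s = a powr (s - 1) * a" using a by (simp add: powr_diff)
    also have "\<dots> \<le> (a + e) powr (s - 1) * a" using a e s by (intro mult_right_mono powr_mono2) auto
    finally show ?thesis .
  qed
  moreover have "e powr s \<le> (a + e) powr (s - 1) * e"
  proof (cases "e = 0")
    case True then show ?thesis using s by simp
  next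
    case False
    then have "e powr s = e powr (s - 1) * e" using e by (simp add: powr_diff)
    also have "\<dots> \<le> (a + e) powr (s - 1) * e" using a e s by (intro mult_right_mono powr_mono2) auto
    finally show ?thesis .
  qed
  ultimately show ?thesis by simp
qed

lemma pow_tri:
  fixes a b p :: real
  assumes p: "0 < p" and w: "0 \<le> w" "w \<le> \<bar>a\<bar> + \<bar>b\<bar>"
  shows "w powr p \<le> 2 powr p * (\<bar>a\<bar> powr p + \<bar>b\<bar> powr p)"
proof -
  define m where "m = max \<bar>a\<bar> \<bar>b\<bar>"
  have "w \<le> 2 * m" unfolding m_def using w by linarith
  then have 1: "w powr p \<le> (2 * m) powr p" using p w by (intro powr_mono2) auto
  have 2: "(2 * m) powr p = 2 powr p * m powr p" unfolding m_def by (subst powr_mult) auto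
  have 3: "m powr p \<le> \<bar>a\<bar> powr p + \<bar>b\<bar> powr p" unfolding m_def by (auto simp: max_def)
  have "2 powr p * m powr p \<le> 2 powr p * (\<bar>a\<bar> powr p + \<bar>b\<bar> powr p)"
    using 3 by (intro mult_left_mono) auto
  with 1 2 show ?thesis by linarith
qed

lemma pow3:
  fixes a b e p :: real
  assumes p: "0 < p" and w: "0 \<le> w" "w \<le> \<bar>a\<bar> + \<bar>b\<bar> + \<bar>e\<bar>"
  shows "w powr p \<le> 3 powr p * (\<bar>a\<bar> powr p + \<bar>b\<bar> powr p + \<bar>e\<bar> powr p)"
proof -
  define m where "m = max \<bar>a\<bar> (max \<bar>b\<bar> \<bar>e\<bar>)"
  have "w \<le> 3 * m" unfolding m_def using w by linarith
  then have 1: "w powr p \<le> (3 * m) powr p" using p w by (intro powr_mono2) auto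
  have 2: "(3 * m) powr p = 3 powr p * m powr p" unfolding m_def by (subst powr_mult) auto
  have 3: "m powr p \<le> \<bar>a\<bar> powr p + \<bar>b\<bar> powr p + \<bar>e\<bar> powr p" unfolding m_def by (auto simp: max_def)
  have "3 powr p * m powr p \<le> 3 powr p * (\<bar>a\<bar> powr p + \<bar>b\<bar> powr p + \<bar>e\<bar> powr p)"
    using 3 by (intro mult_left_mono) auto
  with 1 2 show ?thesis by linarith
qed

definition gam :: "real \<Rightarrow> real" where "gam s = 1 / ((3/4) powr s - (1/4) powr s)"
definition bet :: "real \<Rightarrow> real \<Rightarrow> real" where "bet r s = 4 powr r + gam s * 4 powr (r - s)"

lemma gam_pos: "0 < s \<Longrightarrow> 0 < gam s"
  unfolding gam_def by (simp add: powr_less_mono2)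

lemma key_pw:
  fixes d y r s :: real
  assumes s: "1 \<le> s" "s \<le> r" and d: "d \<noteq> 0"
  shows "\<bar>d\<bar> powr r \<le> gam s * \<bar>d\<bar> powr (r - s) * (\<bar>y + d\<bar> powr s - \<bar>y\<bar> powr s) + bet r s * \<bar>y\<bar> powr r"
proof -
  define D where "D = \<bar>d\<bar>"
  have D: "D > 0" using d by (simp add: D_def)
  have g: "gam s > 0" using gam_pos s by simp
  define \<delta> where "\<delta> = (3/4) powr s - (1/4::real) powr s"
  have \<delta>: "\<delta> > 0" unfolding \<delta>_def using s by (simp add: powr_less_mono2)
  have g\<delta>: "gam s * \<delta> = 1" unfolding gam_def \<delta>_def using \<delta> \<delta>_def by simp
  show ?thesis
  proof (cases "\<bar>y\<bar> < D / 4")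
    case True
    have "3 * D / 4 \<le> \<bar>y + d\<bar>" using True unfolding D_def by linarith
    then have "(3 * D / 4) powr s \<le> \<bar>y + d\<bar> powr s" using D s by (intro powr_mono2) auto
    moreover have "(3 * D / 4) powr s = (3/4) powr s * D powr s" using D by (simp add: powr_mult[symmetric])
    moreover have "\<bar>y\<bar> powr s \<le> (D / 4) powr s" using True s by (intro powr_mono2) auto
    moreover have "(D / 4) powr s = (1/4) powr s * D powr s" using D by (simp add: powr_mult[symmetric])
    ultimately have h: "\<delta> * D powr s \<le> \<bar>y + d\<bar> powr s - \<bar>y\<bar> powr s" unfolding \<delta>_def
      by (simp add: left_diff_distrib)
    have "D powr r = gam s * D powr (r - s) * (\<delta> * D powr s)"
      using g\<delta> D by (simp add: powr_diff field_simps)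
    also have "\<dots> \<le> gam s * D powr (r - s) * (\<bar>y + d\<bar> powr s - \<bar>y\<bar> powr s)"
      using h g by (intro mult_left_mono) auto
    also have "\<dots> \<le> gam s * D powr (r - s) * (\<bar>y + d\<bar> powr s - \<bar>y\<bar> powr s) + bet r s * \<bar>y\<bar> powr r"
      using g unfolding bet_def by (intro add_increasing2 mult_nonneg_nonneg add_nonneg_nonneg) auto
    finally show ?thesis unfolding D_def .
  next
    case False
    then have yD: "D \<le> 4 * \<bar>y\<bar>" by simp
    then have yp: "\<bar>y\<bar> > 0" using D by simp
    have 1: "D powr r \<le> 4 powr r * \<bar>y\<bar> powr r"
      using powr_mono2[of r D "4 * \<bar>y\<bar>"] yD D s by (simp add: powr_mult)
    have 2: "D powr (r - s) \<le> 4 powr (r - s) * \<bar>y\<bar> powr (r - s)"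
      using powr_mono2[of "r - s" D "4 * \<bar>y\<bar>"] yD D s by (simp add: powr_mult)
    have 3: "\<bar>y\<bar> powr (r - s) * \<bar>y\<bar> powr s = \<bar>y\<bar> powr r" using yp by (simp add: powr_add[symmetric])
    define G where "G = gam s"
    define X where "X = D powr (r - s)"
    define h where "h = \<bar>y + d\<bar> powr s - \<bar>y\<bar> powr s"
    define Y where "Y = \<bar>y\<bar> powr r"
    have "- (\<bar>y\<bar> powr s) \<le> h" unfolding h_def by simp
    then have A1: "G * X * (- (\<bar>y\<bar> powr s)) \<le> G * X * h"
      using g unfolding G_def X_def by (intro mult_left_mono) auto
    have A2: "G * X * \<bar>y\<bar> powr s \<le> G * (4 powr (r - s) * \<bar>y\<bar> powr (r - s)) * \<bar>y\<bar> powr s"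
      using 2 g unfolding G_def X_def by (intro mult_right_mono mult_left_mono) auto
    have A3: "G * (4 powr (r - s) * \<bar>y\<bar> powr (r - s)) * \<bar>y\<bar> powr s = G * 4 powr (r - s) * Y"
      using 3 unfolding Y_def by (simp add: algebra_simps)
    have A4: "G * X * (- (\<bar>y\<bar> powr s)) = - (G * X * \<bar>y\<bar> powr s)" by simp
    have A5: "bet r s * Y = 4 powr r * Y + G * 4 powr (r - s) * Y"
      unfolding bet_def G_def by (simp add: algebra_simps)
    have "D powr r \<le> G * X * h + bet r s * Y"
      using A1 A2 A3 A4 A5 1 unfolding Y_def by linarith
    then show ?thesis unfolding D_def G_def X_def h_def Y_def .
  qed
qed




lemma J_upper: "t \<in> J n i \<Longrightarrow> t < real i / real n"
  by (cases "i = 1") (auto simp: J_def)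

lemma J_lower: "1 \<le> i \<Longrightarrow> t \<in> J n i \<Longrightarrow> real (i - 1) / real n \<le> t"
  by (cases "i = 1") (auto simp: J_def)

lemma J_open: "1 \<le> i \<Longrightarrow> {real (i - 1) / real n <..< real i / real n} \<subseteq> J n i"
  by (cases "i = 1") (auto simp: J_def)

lemma mid_J:
  assumes "1 \<le> i" "i \<le> n"
  shows "(2 * real i - 1) / (2 * real n) \<in> J n i" "(2 * real i - 1) / (2 * real n) \<in> {0<..<1}"
proof -
  have n: "real n > 0" using assms by simp
  have e: "real (i - 1) = real i - 1" using assms by simp
  have "(2 * real i - 1) / (2 * real n) \<in> {real (i - 1) / real n <..< real i / real n}"
    using n unfolding e by (auto simp: field_simps)
  then show "(2 * real i - 1) / (2 * real n) \<in> J n i" using J_open[OF assms(1), of n] by auto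
  then show "(2 * real i - 1) / (2 * real n) \<in> {0<..<1}" using J_sub[OF assms] by auto
qed

lemma J_borel: "J n i \<in> sets borel"
  by (simp add: J_def)

lemma J_fin: "emeasure lborel (J n i) \<noteq> \<infinity>"
proof -
  have "real (i - 1) / real n \<le> real i / real n" by (simp add: divide_right_mono)
  then show ?thesis by (cases "i = 1") (auto simp: J_def emeasure_lborel_Ico)
qed

context QS begin

definition cost :: "nat \<Rightarrow> real \<Rightarrow> (nat \<Rightarrow> real) \<Rightarrow> real" where
  "cost n p v = (\<Sum>i=1..n. LINT t:J n i|lborel. \<bar>v i - Q t\<bar> powr p)"

lemma cint: "0 < p \<Longrightarrow> p \<le> r \<Longrightarrow> 1 \<le> i \<Longrightarrow> i \<le> n \<Longrightarrow>
    set_integrable lborel (J n i) (\<lambda>t. \<bar>c - Q t\<bar> powr p)"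
  using J_sub[of i n] J_sets[of n i] by (intro int_const) auto

lemma Jconst: "1 \<le> i \<Longrightarrow> 1 \<le> n \<Longrightarrow> (LINT t:J n i|lborel. (c::real)) = c / real n"
  using J_meas[of i n] J_fin[of n i] J_borel[of n i] by (subst set_integral_const) auto

lemma Jconst_int: "set_integrable lborel (J n i) (\<lambda>t. c::real)"
  unfolding set_integrable_def using J_fin[of n i]
  by (intro integrable_scaleR_left integrable_real_indicator) (auto simp: less_top J_borel)

lemma upper_bd:
  assumes n: "1 \<le> n" and s: "1 \<le> s" "s \<le> r" and x: "x \<in> Xi n"
    and min: "\<And>y. y \<in> Xi n \<Longrightarrow> cost n s x \<le> cost n s y"
    and j: "1 \<le> j" "j < n"
  shows "x j \<le> Q (real j / real n)"
proof (rule ccontr)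
  define b where "b = Q (real j / real n)"
  assume "\<not> x j \<le> Q (real j / real n)"
  then have bx: "b < x j" by (simp add: b_def)
  have jA: "real j / real n \<in> {0<..<1}" using j by auto
  have xm: "\<And>a a'. 1 \<le> a \<Longrightarrow> a \<le> a' \<Longrightarrow> a' \<le> n \<Longrightarrow> x a \<le> x a'" using x by (auto simp: Xi_def)
  define y where "y = (\<lambda>k. if k \<le> j then min (x k) b else x k)"
  have yX: "y \<in> Xi n" unfolding Xi_def
  proof (intro CollectI allI impI)
    fix a a' :: nat assume a: "1 \<le> a" "a \<le> a'" "a' \<le> n"
    show "y a \<le> y a'"
    proof (cases "a' \<le> j")
      case True then show ?thesis using xm[OF a] a by (auto simp: y_def)
    next
      case False
      note F = False
      show ?thesis
      proof (cases "a \<le> j")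
        case True
        have "x j \<le> x a'" using xm[of j a'] j a F by auto
        then show ?thesis using True F bx by (auto simp: y_def)
      next
        case False then show ?thesis using xm[OF a] F by (auto simp: y_def)
      qed
    qed
  qed
  have sp: "0 < s" using s by simp
  have le: "(LINT t:J n i|lborel. \<bar>y i - Q t\<bar> powr s) \<le> (LINT t:J n i|lborel. \<bar>x i - Q t\<bar> powr s)"
    if i: "i \<in> {1..n}" for i
  proof (rule set_integral_mono)
    show "set_integrable lborel (J n i) (\<lambda>t. \<bar>y i - Q t\<bar> powr s)"
         "set_integrable lborel (J n i) (\<lambda>t. \<bar>x i - Q t\<bar> powr s)"
      using i sp s by (auto intro!: cint)
    fix t assume t: "t \<in> J n i"
    have tA: "t \<in> {0<..<1}" using J_sub[of i n] i t by auto
    show "\<bar>y i - Q t\<bar> powr s \<le> \<bar>x i - Q t\<bar> powr s"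
    proof (cases "i \<le> j")
      case True
      have "t < real i / real n" by (rule J_upper[OF t])
      also have "\<dots> \<le> real j / real n" using True n by (simp add: divide_right_mono)
      finally have "Q t \<le> b" unfolding b_def using mono_onD[OF mono tA jA] by simp
      then have "\<bar>y i - Q t\<bar> \<le> \<bar>x i - Q t\<bar>" using True by (auto simp: y_def)
      then show ?thesis using sp by (intro powr_mono2) auto
    next
      case False then show ?thesis by (simp add: y_def)
    qed
  qed
  have lt: "(LINT t:J n j|lborel. \<bar>y j - Q t\<bar> powr s) < (LINT t:J n j|lborel. \<bar>x j - Q t\<bar> powr s)"
  proof -
    have yj: "y j = b" using bx by (simp add: y_def)
    have "(LINT t:J n j|lborel. \<bar>b - Q t\<bar> powr s + (x j - b) powr s)
        \<le> (LINT t:J n j|lborel. \<bar>x j - Q t\<bar> powr s)"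
    proof (rule set_integral_mono)
      show "set_integrable lborel (J n j) (\<lambda>t. \<bar>b - Q t\<bar> powr s + (x j - b) powr s)"
        using j sp s by (intro set_integral_add(1) cint Jconst_int) auto
      show "set_integrable lborel (J n j) (\<lambda>t. \<bar>x j - Q t\<bar> powr s)"
        using j sp s by (auto intro!: cint)
      fix t assume t: "t \<in> J n j"
      have tA: "t \<in> {0<..<1}" using J_sub[of j n] j t by auto
      have "t < real j / real n" by (rule J_upper[OF t])
      then have "Q t \<le> b" unfolding b_def using mono_onD[OF mono tA jA] by simp
      then have "\<bar>b - Q t\<bar> powr s + (x j - b) powr s \<le> (\<bar>b - Q t\<bar> + (x j - b)) powr s"
        using bx s by (intro superadd) auto
      also have "\<bar>b - Q t\<bar> + (x j - b) = \<bar>x j - Q t\<bar>" using \<open>Q t \<le> b\<close> bx by auto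
      finally show "\<bar>b - Q t\<bar> powr s + (x j - b) powr s \<le> \<bar>x j - Q t\<bar> powr s" .
    qed
    moreover have "(LINT t:J n j|lborel. \<bar>b - Q t\<bar> powr s + (x j - b) powr s)
        = (LINT t:J n j|lborel. \<bar>b - Q t\<bar> powr s) + (x j - b) powr s / real n"
      using j sp s n by (subst set_integral_add(2)) (auto intro!: cint Jconst_int simp: Jconst)
    moreover have "(x j - b) powr s / real n > 0" using bx n by simp
    ultimately show ?thesis unfolding yj by linarith
  qed
  have "cost n s y < cost n s x" unfolding cost_def
    by (rule sum_strict_mono_ex1) (use le lt j in auto)
  then show False using min[OF yX] by simp
qed

lemma lower_bd:
  assumes n: "1 \<le> n" and s: "1 \<le> s" "s \<le> r" and x: "x \<in> Xi n"
    and min: "\<And>y. y \<in> Xi n \<Longrightarrow> cost n s x \<le> cost n s y"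
    and j: "1 < j" "j \<le> n"
  shows "Q (real (j - 1) / real n) \<le> x j"
proof (rule ccontr)
  define b where "b = Q (real (j - 1) / real n)"
  assume "\<not> Q (real (j - 1) / real n) \<le> x j"
  then have bx: "x j < b" by (simp add: b_def)
  have jA: "real (j - 1) / real n \<in> {0<..<1}" using j by auto
  have xm: "\<And>a a'. 1 \<le> a \<Longrightarrow> a \<le> a' \<Longrightarrow> a' \<le> n \<Longrightarrow> x a \<le> x a'" using x by (auto simp: Xi_def)
  define y where "y = (\<lambda>k. if j \<le> k then max (x k) b else x k)"
  have yX: "y \<in> Xi n" unfolding Xi_def
  proof (intro CollectI allI impI)
    fix a a' :: nat assume a: "1 \<le> a" "a \<le> a'" "a' \<le> n"
    show "y a \<le> y a'"
    proof (cases "j \<le> a")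
      case True then show ?thesis using xm[OF a] a by (auto simp: y_def)
    next
      case False
      note F = False
      show ?thesis
      proof (cases "j \<le> a'")
        case True
        have "x a \<le> x j" using xm[of a j] j a F by auto
        then show ?thesis using True F bx by (auto simp: y_def)
      next
        case False then show ?thesis using xm[OF a] F by (auto simp: y_def)
      qed
    qed
  qed
  have sp: "0 < s" using s by simp
  have le: "(LINT t:J n i|lborel. \<bar>y i - Q t\<bar> powr s) \<le> (LINT t:J n i|lborel. \<bar>x i - Q t\<bar> powr s)"
    if i: "i \<in> {1..n}" for i
  proof (rule set_integral_mono)
    show "set_integrable lborel (J n i) (\<lambda>t. \<bar>y i - Q t\<bar> powr s)"
         "set_integrable lborel (J n i) (\<lambda>t. \<bar>x i - Q t\<bar> powr s)"
      using i sp s by (auto intro!: cint)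
    fix t assume t: "t \<in> J n i"
    have tA: "t \<in> {0<..<1}" using J_sub[of i n] i t by auto
    show "\<bar>y i - Q t\<bar> powr s \<le> \<bar>x i - Q t\<bar> powr s"
    proof (cases "j \<le> i")
      case True
      have "real (j - 1) / real n \<le> real (i - 1) / real n" using True n by (simp add: divide_right_mono)
      also have "\<dots> \<le> t" using J_lower[OF _ t] i by simp
      finally have "b \<le> Q t" unfolding b_def using mono_onD[OF mono jA tA] by simp
      then have "\<bar>y i - Q t\<bar> \<le> \<bar>x i - Q t\<bar>" using True by (auto simp: y_def)
      then show ?thesis using sp by (intro powr_mono2) auto
    next
      case False then show ?thesis by (simp add: y_def)
    qed
  qed
  have lt: "(LINT t:J n j|lborel. \<bar>y j - Q t\<bar> powr s) < (LINT t:J n j|lborel. \<bar>x j - Q t\<bar> powr s)"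
  proof -
    have yj: "y j = b" using bx by (simp add: y_def)
    have "(LINT t:J n j|lborel. \<bar>b - Q t\<bar> powr s + (b - x j) powr s)
        \<le> (LINT t:J n j|lborel. \<bar>x j - Q t\<bar> powr s)"
    proof (rule set_integral_mono)
      show "set_integrable lborel (J n j) (\<lambda>t. \<bar>b - Q t\<bar> powr s + (b - x j) powr s)"
        using j sp s by (intro set_integral_add(1) cint Jconst_int) auto
      show "set_integrable lborel (J n j) (\<lambda>t. \<bar>x j - Q t\<bar> powr s)"
        using j sp s by (auto intro!: cint)
      fix t assume t: "t \<in> J n j"
      have tA: "t \<in> {0<..<1}" using J_sub[of j n] j t by auto
      have "real (j - 1) / real n \<le> t" using J_lower[OF _ t] j by simp
      then have "b \<le> Q t" unfolding b_def using mono_onD[OF mono jA tA] by simp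
      then have "\<bar>b - Q t\<bar> powr s + (b - x j) powr s \<le> (\<bar>b - Q t\<bar> + (b - x j)) powr s"
        using bx s by (intro superadd) auto
      also have "\<bar>b - Q t\<bar> + (b - x j) = \<bar>x j - Q t\<bar>" using \<open>b \<le> Q t\<close> bx by auto
      finally show "\<bar>b - Q t\<bar> powr s + (b - x j) powr s \<le> \<bar>x j - Q t\<bar> powr s" .
    qed
    moreover have "(LINT t:J n j|lborel. \<bar>b - Q t\<bar> powr s + (b - x j) powr s)
        = (LINT t:J n j|lborel. \<bar>b - Q t\<bar> powr s) + (b - x j) powr s / real n"
      using j sp s n by (subst set_integral_add(2)) (auto intro!: cint Jconst_int simp: Jconst)
    moreover have "(b - x j) powr s / real n > 0" using bx n by simp
    ultimately show ?thesis unfolding yj by linarith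
  qed
  have "cost n s y < cost n s x" unfolding cost_def
    by (rule sum_strict_mono_ex1) (use le lt j in auto)
  then show False using min[OF yX] by simp
qed

end



lemma sint_nonneg:
  fixes f :: "real \<Rightarrow> real"
  assumes "\<And>t. t \<in> A \<Longrightarrow> 0 \<le> f t"
  shows "0 \<le> (LINT t:A|M. f t)"
  unfolding set_lebesgue_integral_def using assms
  by (intro Bochner_Integration.integral_nonneg) (auto simp: indicator_def)

lemma bet_nonneg: "0 < s \<Longrightarrow> 0 \<le> bet r s"
  unfolding bet_def using gam_pos[of s] by (intro add_nonneg_nonneg mult_nonneg_nonneg) auto

context QS begin

definition cv :: "nat \<Rightarrow> nat \<Rightarrow> real" where
  "cv n i = Q ((2 * real i - 1) / (2 * real n))"

lemma cv_Xi: "cv n \<in> Xi n"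
  unfolding Xi_def
proof (intro CollectI allI impI)
  fix a a' :: nat assume a: "1 \<le> a" "a \<le> a'" "a' \<le> n"
  have "(2 * real a - 1) / (2 * real n) \<le> (2 * real a' - 1) / (2 * real n)"
    using a by (intro divide_right_mono) auto
  then show "cv n a \<le> cv n a'" unfolding cv_def
    using mid_J(2)[of a n] mid_J(2)[of a' n] a by (intro mono_onD[OF mono]) auto
qed

lemma per_i:
  assumes n: "1 \<le> n" and s: "1 \<le> s" "s \<le> r" and x: "x \<in> Xi n"
    and min: "\<And>y. y \<in> Xi n \<Longrightarrow> cost n s x \<le> cost n s y"
    and i: "1 \<le> i" "i \<le> n"
  shows "(LINT t:J n i|lborel. \<bar>x i - Q t\<bar> powr r)
         \<le> 2 powr r * (bet r s + 1) * (LINT t:J n i|lborel. \<bar>cv n i - Q t\<bar> powr r)"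
proof -
  define c where "c = cv n i"
  have sp: "0 < s" using s by simp
  have rp: "0 < r" using r1 by simp
  have xm: "\<And>a a'. 1 \<le> a \<Longrightarrow> a \<le> a' \<Longrightarrow> a' \<le> n \<Longrightarrow> x a \<le> x a'" using x by (auto simp: Xi_def)
  have mA: "(2 * real i - 1) / (2 * real n) \<in> {0<..<1}" using mid_J(2)[OF i] .
  have mJ: "(2 * real i - 1) / (2 * real n) \<in> J n i" using mid_J(1)[OF i] .
  have lo: "x (i - 1) \<le> c" if "2 \<le> i"
  proof -
    have "x (i - 1) \<le> Q (real (i - 1) / real n)"
      using upper_bd[OF n s x min, of "i - 1"] that i by auto
    also have "\<dots> \<le> c" unfolding c_def cv_def
    proof (rule mono_onD[OF mono])
      show "real (i - 1) / real n \<in> {0<..<1}" using that i by auto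
      show "real (i - 1) / real n \<le> (2 * real i - 1) / (2 * real n)" using J_lower[OF i(1) mJ] .
    qed (rule mA)
    finally show ?thesis .
  qed
  have hi: "c \<le> x (i + 1)" if "i < n"
  proof -
    have "c \<le> Q (real i / real n)" unfolding c_def cv_def
    proof (rule mono_onD[OF mono mA])
      show "real i / real n \<in> {0<..<1}" using that i by auto
      show "(2 * real i - 1) / (2 * real n) \<le> real i / real n" using J_upper[OF mJ] by simp
    qed
    also have "\<dots> \<le> x (i + 1)"
      using lower_bd[OF n s x min, of "i + 1"] that i by auto
    finally show ?thesis .
  qed
  define y where "y = x(i := c)"
  have yX: "y \<in> Xi n" unfolding Xi_def
  proof (intro CollectI allI impI)
    fix a a' :: nat assume a: "1 \<le> a" "a \<le> a'" "a' \<le> n"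
    show "y a \<le> y a'"
    proof (cases "a = i")
      case True
      show ?thesis
      proof (cases "a' = i")
        case False
        then have "i < n" "i + 1 \<le> a'" using a True by auto
        then have "x (i + 1) \<le> x a'" using xm[of "i+1" a'] a by auto
        then show ?thesis using hi[OF \<open>i < n\<close>] True False by (simp add: y_def)
      qed (simp add: True)
    next
      case False
      note F = False
      show ?thesis
      proof (cases "a' = i")
        case True
        then have "2 \<le> i" "a \<le> i - 1" using a F by auto
        then have "x a \<le> x (i - 1)" using xm[of a "i - 1"] a i by auto
        then show ?thesis using lo[OF \<open>2 \<le> i\<close>] True F by (simp add: y_def)
      next
        case False then show ?thesis using xm[OF a] F by (simp add: y_def)
      qed
    qed
  qed
  have iin: "i \<in> {1..n}" using i by simp
  have "cost n s x \<le> cost n s y" by (rule min[OF yX])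
  moreover have "cost n s x = (LINT t:J n i|lborel. \<bar>x i - Q t\<bar> powr s) +
      (\<Sum>k\<in>{1..n}-{i}. LINT t:J n k|lborel. \<bar>x k - Q t\<bar> powr s)"
    unfolding cost_def using iin by (simp add: sum.remove)
  moreover have "cost n s y = (LINT t:J n i|lborel. \<bar>c - Q t\<bar> powr s) +
      (\<Sum>k\<in>{1..n}-{i}. LINT t:J n k|lborel. \<bar>x k - Q t\<bar> powr s)"
    unfolding cost_def using iin by (simp add: sum.remove y_def)
  ultimately have As: "(LINT t:J n i|lborel. \<bar>x i - Q t\<bar> powr s) \<le> (LINT t:J n i|lborel. \<bar>c - Q t\<bar> powr s)"
    by simp
  define D where "D = \<bar>x i - c\<bar>"
  define Br where "Br = (LINT t:J n i|lborel. \<bar>c - Q t\<bar> powr r)"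
  have Br0: "0 \<le> Br" unfolding Br_def by (rule sint_nonneg) simp
  have Dr: "D powr r / real n \<le> bet r s * Br"
  proof (cases "x i = c")
    case True
    then show ?thesis unfolding D_def using bet_nonneg[OF sp] Br0 by simp
  next
    case False
    then have d: "x i - c \<noteq> 0" by simp
    have "D powr r / real n = (LINT t:J n i|lborel. D powr r)" using Jconst[OF i(1)] n by simp
    also have "\<dots> \<le> (LINT t:J n i|lborel. gam s * D powr (r - s) * (\<bar>x i - Q t\<bar> powr s - \<bar>c - Q t\<bar> powr s)
        + bet r s * \<bar>c - Q t\<bar> powr r)"
    proof (rule set_integral_mono)
      show "set_integrable lborel (J n i) (\<lambda>t. D powr r)" by (rule Jconst_int)
      show "set_integrable lborel (J n i) (\<lambda>t. gam s * D powr (r - s) * (\<bar>x i - Q t\<bar> powr s - \<bar>c - Q t\<bar> powr s)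
        + bet r s * \<bar>c - Q t\<bar> powr r)"
        using sp s rp i by (intro set_integral_add(1) set_integrable_mult_right set_integral_diff(1) cint) auto
      fix t
      show "D powr r \<le> gam s * D powr (r - s) * (\<bar>x i - Q t\<bar> powr s - \<bar>c - Q t\<bar> powr s)
        + bet r s * \<bar>c - Q t\<bar> powr r"
        using key_pw[OF s d, of "c - Q t"] unfolding D_def by simp
    qed
    also have "\<dots> = gam s * D powr (r - s) * ((LINT t:J n i|lborel. \<bar>x i - Q t\<bar> powr s) -
        (LINT t:J n i|lborel. \<bar>c - Q t\<bar> powr s)) + bet r s * Br"
    proof -
      have I1: "set_integrable lborel (J n i) (\<lambda>t. \<bar>x i - Q t\<bar> powr s)" using sp s i by (intro cint) auto
      have I2: "set_integrable lborel (J n i) (\<lambda>t. \<bar>c - Q t\<bar> powr s)" using sp s i by (intro cint) auto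
      have I3: "set_integrable lborel (J n i) (\<lambda>t. \<bar>c - Q t\<bar> powr r)" using rp i by (intro cint) auto
      have "(LINT t:J n i|lborel. gam s * D powr (r - s) * (\<bar>x i - Q t\<bar> powr s - \<bar>c - Q t\<bar> powr s)
        + bet r s * \<bar>c - Q t\<bar> powr r) = (LINT t:J n i|lborel. gam s * D powr (r - s) * (\<bar>x i - Q t\<bar> powr s - \<bar>c - Q t\<bar> powr s))
        + (LINT t:J n i|lborel. bet r s * \<bar>c - Q t\<bar> powr r)"
        by (rule set_integral_add(2)) (use I1 I2 I3 in auto)
      also have "\<dots> = gam s * D powr (r - s) * ((LINT t:J n i|lborel. \<bar>x i - Q t\<bar> powr s) -
        (LINT t:J n i|lborel. \<bar>c - Q t\<bar> powr s)) + bet r s * Br"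
        unfolding Br_def by (simp add: set_integral_diff(2)[OF I1 I2])
      finally show ?thesis .
    qed
    also have "\<dots> \<le> bet r s * Br"
    proof -
      have "gam s * D powr (r - s) \<ge> 0" using gam_pos[OF sp] by simp
      then have "gam s * D powr (r - s) * ((LINT t:J n i|lborel. \<bar>x i - Q t\<bar> powr s) -
        (LINT t:J n i|lborel. \<bar>c - Q t\<bar> powr s)) \<le> 0"
        using As by (simp add: mult_nonneg_nonpos)
      then show ?thesis by simp
    qed
    finally show ?thesis .
  qed
  have "(LINT t:J n i|lborel. \<bar>x i - Q t\<bar> powr r) \<le> (LINT t:J n i|lborel. 2 powr r * (D powr r + \<bar>c - Q t\<bar> powr r))"
  proof (rule set_integral_mono)
    show "set_integrable lborel (J n i) (\<lambda>t. \<bar>x i - Q t\<bar> powr r)" using rp i by (intro cint) auto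
    show "set_integrable lborel (J n i) (\<lambda>t. 2 powr r * (D powr r + \<bar>c - Q t\<bar> powr r))"
      using rp i by (intro set_integrable_mult_right set_integral_add(1) Jconst_int cint) auto
    fix t
    have "\<bar>x i - Q t\<bar> powr r \<le> 2 powr r * (\<bar>x i - c\<bar> powr r + \<bar>c - Q t\<bar> powr r)"
      using rp by (intro pow_tri) auto
    then show "\<bar>x i - Q t\<bar> powr r \<le> 2 powr r * (D powr r + \<bar>c - Q t\<bar> powr r)" unfolding D_def by simp
  qed
  also have "\<dots> = 2 powr r * (D powr r / real n + Br)"
    unfolding Br_def using rp i n
    by (subst set_integral_mult_right, subst set_integral_add(2)) (auto intro!: Jconst_int cint simp: Jconst)
  also have "\<dots> \<le> 2 powr r * (bet r s * Br + Br)" using Dr by (intro mult_left_mono) auto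
  also have "\<dots> = 2 powr r * (bet r s + 1) * Br" by (simp add: algebra_simps)
  finally show ?thesis unfolding Br_def c_def .
qed

lemma cost_cmp:
  assumes n: "1 \<le> n" and s: "1 \<le> s" "s \<le> r" and x: "x \<in> Xi n"
    and min: "\<And>y. y \<in> Xi n \<Longrightarrow> cost n s x \<le> cost n s y"
  shows "cost n r x \<le> 2 powr r * (bet r s + 1) * cost n r (cv n)"
  unfolding cost_def sum_distrib_left
  by (rule sum_mono) (use per_i[OF n s x min] in auto)

end



definition Tr :: "real \<Rightarrow> real \<Rightarrow> real" where "Tr K u = max (- K) (min K u)"
definition Rr :: "real \<Rightarrow> real \<Rightarrow> real" where "Rr K u = u - Tr K u"

lemma Rr_abs: "0 \<le> K \<Longrightarrow> \<bar>Rr K u\<bar> = max 0 (\<bar>u\<bar> - K)"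
  unfolding Rr_def Tr_def by (auto simp: max_def min_def)

lemma Rr_le: "0 \<le> K \<Longrightarrow> \<bar>Rr K u\<bar> \<le> \<bar>u\<bar>"
  by (simp add: Rr_abs)

lemma Rr_mono: "0 \<le> K \<Longrightarrow> \<bar>c\<bar> \<le> \<bar>q\<bar> \<Longrightarrow> \<bar>Rr K c\<bar> \<le> \<bar>Rr K q\<bar>"
  by (simp add: Rr_abs)

lemma Tr_mono: "u \<le> v \<Longrightarrow> Tr K u \<le> Tr K v"
  unfolding Tr_def by auto

lemma Tr_bd: "0 \<le> K \<Longrightarrow> - K \<le> Tr K u \<and> Tr K u \<le> K"
  unfolding Tr_def by auto

lemma Rr_meas[measurable]: "Rr K \<in> borel_measurable borel"
  unfolding Rr_def Tr_def by measurable

lemma Tr_meas[measurable]: "Tr K \<in> borel_measurable borel"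
  unfolding Tr_def by measurable

lemma telesc: "(\<Sum>i=1..n. f i - f (i - 1)) = f n - (f 0 :: real)" for n :: nat
  by (induction n) (auto simp: sum.cl_ivl_Suc)

context QS begin

lemma RQ_int: "0 \<le> K \<Longrightarrow> B \<in> sets lborel \<Longrightarrow> B \<subseteq> {0<..<1} \<Longrightarrow>
    set_integrable lborel B (\<lambda>t. \<bar>Rr K (Q t)\<bar> powr r)"
  by (rule comp_int[where C=0 and D=1])
     (auto intro!: powr_mono2 Rr_le simp: r1 order.trans[OF _ r1])

lemma half:
  assumes K: "0 \<le> K" and i: "1 \<le> i" "i \<le> n"
  shows "\<bar>Rr K (cv n i)\<bar> powr r / real n \<le> 2 * (LINT t:J n i|lborel. \<bar>Rr K (Q t)\<bar> powr r)"
proof -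
  define m where "m = (2 * real i - 1) / (2 * real n)"
  define c where "c = cv n i"
  have n: "real n > 0" using i by simp
  have mA: "m \<in> {0<..<1}" using mid_J(2)[OF i] by (simp add: m_def)
  have e: "real (i - 1) = real i - 1" using i by simp
  have lo: "real (i - 1) / real n < m" and hi: "m < real i / real n"
    using n unfolding m_def e by (auto simp: field_simps)
  define H where "H = (if 0 \<le> c then {m ..< real i / real n} else {real (i - 1) / real n <.. m})"
  have HJ: "H \<subseteq> J n i"
    using J_open[OF i(1), of n] lo hi by (auto simp: H_def)
  have HA: "H \<subseteq> {0<..<1}" using HJ J_sub[OF i] by auto
  have Hb: "H \<in> sets borel" by (simp add: H_def)
  have Hm: "measure lborel H = 1 / (2 * real n)"
    using lo hi n by (auto simp: H_def m_def e field_simps)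
  have Hfin: "emeasure lborel H \<noteq> \<infinity>"
    using lo hi by (auto simp: H_def)
  have pt: "\<bar>Rr K c\<bar> \<le> \<bar>Rr K (Q t)\<bar>" if t: "t \<in> H" for t
  proof (rule Rr_mono[OF K])
    have tA: "t \<in> {0<..<1}" using HA t by auto
    show "\<bar>c\<bar> \<le> \<bar>Q t\<bar>"
    proof (cases "0 \<le> c")
      case True
      then have "m \<le> t" using t by (simp add: H_def)
      then have "c \<le> Q t" unfolding c_def cv_def m_def[symmetric] using mono_onD[OF mono mA tA] by simp
      then show ?thesis using True by simp
    next
      case False
      then have "t \<le> m" using t by (simp add: H_def)
      then have "Q t \<le> c" unfolding c_def cv_def m_def[symmetric] using mono_onD[OF mono tA mA] by simp
      then show ?thesis using False by simp
    qed
  qed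
  define C where "C = \<bar>Rr K c\<bar> powr r"
  have iH: "set_integrable lborel (J n i) (\<lambda>t. indicator H t * C)"
  proof -
    have "(\<lambda>t. indicator (J n i) t *\<^sub>R (indicator H t * C)) = (\<lambda>t. indicator H t * C)"
      using HJ by (intro ext) (auto split: split_indicator)
    moreover have "integrable lborel (\<lambda>t. indicator H t * C)"
      using Hfin Hb by (intro integrable_mult_left integrable_real_indicator) (auto simp: less_top)
    ultimately show ?thesis unfolding set_integrable_def by simp
  qed
  have "(LINT t:J n i|lborel. indicator H t * C) = (LINT t:H|lborel. C)"
  proof -
    have "(\<lambda>t. indicator (J n i) t *\<^sub>R (indicator H t * C)) = (\<lambda>t. indicator H t *\<^sub>R C)"
      using HJ by (intro ext) (auto split: split_indicator)
    then show ?thesis unfolding set_lebesgue_integral_def by simp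
  qed
  also have "\<dots> = C / (2 * real n)" using Hb Hfin Hm by (subst set_integral_const) auto
  finally have eq: "(LINT t:J n i|lborel. indicator H t * C) = C / (2 * real n)" .
  have "(LINT t:J n i|lborel. indicator H t * C) \<le> (LINT t:J n i|lborel. \<bar>Rr K (Q t)\<bar> powr r)"
  proof (rule set_integral_mono[OF iH])
    show "set_integrable lborel (J n i) (\<lambda>t. \<bar>Rr K (Q t)\<bar> powr r)"
      using K J_sub[OF i] J_borel[of n i] by (intro RQ_int) auto
    fix t
    show "indicator H t * C \<le> \<bar>Rr K (Q t)\<bar> powr r"
      using pt[of t] r1 unfolding C_def by (auto simp: indicator_def intro: powr_mono2)
  qed
  then show ?thesis using eq unfolding C_def c_def by (simp add: field_simps)
qed

lemma pow_step:
  fixes a D L :: real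
  assumes "0 \<le> a" "a \<le> D" "D \<le> L" "1 \<le> r"
  shows "a powr r \<le> L powr (r - 1) * D"
proof (cases "a = 0")
  case True then show ?thesis using assms by simp
next
  case False
  then have "a powr r = a powr (r - 1) * a" using assms by (simp add: powr_diff)
  also have "\<dots> \<le> L powr (r - 1) * D" using assms by (intro mult_mono powr_mono2) auto
  finally show ?thesis .
qed

lemma cost_bd:
  assumes K: "0 < K" and n: "1 \<le> n"
  shows "cost n r (cv n) \<le> 3 powr r * ((2 * K) powr r / real n + 3 * (LINT t:{0<..<1}|lborel. \<bar>Rr K (Q t)\<bar> powr r))"
proof -
  define P where "P j = (if j = 0 then - K else if n \<le> j then K else Tr K (Q (real j / real n)))" for j
  have rp: "0 < r" using r1 by simp
  have Pb: "- K \<le> P j \<and> P j \<le> K" for j using Tr_bd[of K] K by (auto simp: P_def)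
  have bnd: "P (i - 1) \<le> Tr K (Q u) \<and> Tr K (Q u) \<le> P i" if i: "1 \<le> i" "i \<le> n" and u: "u \<in> J n i" for i u
  proof
    have uA: "u \<in> {0<..<1}" using J_sub[OF i] u by auto
    show "P (i - 1) \<le> Tr K (Q u)"
    proof (cases "i = 1")
      case True then show ?thesis using Tr_bd[of K] K by (simp add: P_def)
    next
      case False
      then have "i - 1 \<noteq> 0" "\<not> n \<le> i - 1" using i by auto
      moreover have "Q (real (i - 1) / real n) \<le> Q u"
        using mono_onD[OF mono _ uA J_lower[OF i(1) u]] \<open>i - 1 \<noteq> 0\<close> i by auto
      ultimately show ?thesis by (simp add: P_def Tr_mono)
    qed
    show "Tr K (Q u) \<le> P i"
    proof (cases "n \<le> i")
      case True then show ?thesis using Tr_bd[of K] K i by (simp add: P_def)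
    next
      case False
      moreover have "Q u \<le> Q (real i / real n)"
        using mono_onD[OF mono uA _ less_imp_le[OF J_upper[OF u]]] False i by auto
      ultimately show ?thesis using i by (simp add: P_def Tr_mono)
    qed
  qed
  have per: "(LINT t:J n i|lborel. \<bar>cv n i - Q t\<bar> powr r)
      \<le> 3 powr r * ((2 * K) powr (r - 1) * (P i - P (i - 1)) / real n + 3 * (LINT t:J n i|lborel. \<bar>Rr K (Q t)\<bar> powr r))"
    if i: "1 \<le> i" "i \<le> n" for i
  proof -
    define c where "c = cv n i"
    define \<Delta> where "\<Delta> = P i - P (i - 1)"
    have cb: "P (i - 1) \<le> Tr K c \<and> Tr K c \<le> P i"
      unfolding c_def cv_def by (rule bnd[OF i mid_J(1)[OF i]])
    have iR: "set_integrable lborel (J n i) (\<lambda>t. \<bar>Rr K (Q t)\<bar> powr r)"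
      using K J_sub[OF i] J_borel[of n i] by (intro RQ_int) auto
    have "(LINT t:J n i|lborel. \<bar>c - Q t\<bar> powr r)
        \<le> (LINT t:J n i|lborel. 3 powr r * ((2 * K) powr (r - 1) * \<Delta> + \<bar>Rr K c\<bar> powr r) + 3 powr r * \<bar>Rr K (Q t)\<bar> powr r)"
    proof (rule set_integral_mono)
      show "set_integrable lborel (J n i) (\<lambda>t. \<bar>c - Q t\<bar> powr r)" using rp i by (intro cint) auto
      show "set_integrable lborel (J n i) (\<lambda>t. 3 powr r * ((2 * K) powr (r - 1) * \<Delta> + \<bar>Rr K c\<bar> powr r) + 3 powr r * \<bar>Rr K (Q t)\<bar> powr r)"
        using iR by (intro set_integral_add(1) Jconst_int set_integrable_mult_right) auto
      fix t assume t: "t \<in> J n i"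
      have tb: "P (i - 1) \<le> Tr K (Q t) \<and> Tr K (Q t) \<le> P i" by (rule bnd[OF i t])
      have "\<bar>c - Q t\<bar> \<le> \<bar>Tr K c - Tr K (Q t)\<bar> + \<bar>Rr K c\<bar> + \<bar>Rr K (Q t)\<bar>"
        unfolding Rr_def by linarith
      then have "\<bar>c - Q t\<bar> powr r \<le> 3 powr r * (\<bar>Tr K c - Tr K (Q t)\<bar> powr r + \<bar>Rr K c\<bar> powr r + \<bar>Rr K (Q t)\<bar> powr r)"
        using rp by (intro pow3) auto
      moreover have "\<bar>Tr K c - Tr K (Q t)\<bar> powr r \<le> (2 * K) powr (r - 1) * \<Delta>"
        using cb tb Pb[of i] Pb[of "i - 1"] r1 unfolding \<Delta>_def by (intro pow_step) auto
      ultimately show "\<bar>c - Q t\<bar> powr r \<le> 3 powr r * ((2 * K) powr (r - 1) * \<Delta> + \<bar>Rr K c\<bar> powr r) + 3 powr r * \<bar>Rr K (Q t)\<bar> powr r"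
        by (smt (verit, ccfv_SIG) mult_left_mono powr_ge_zero distrib_left)
    qed
    also have "\<dots> = 3 powr r * ((2 * K) powr (r - 1) * \<Delta> + \<bar>Rr K c\<bar> powr r) / real n + 3 powr r * (LINT t:J n i|lborel. \<bar>Rr K (Q t)\<bar> powr r)"
      using iR i n by (subst set_integral_add(2)) (auto intro!: Jconst_int simp: Jconst)
    also have "\<dots> \<le> 3 powr r * ((2 * K) powr (r - 1) * \<Delta> / real n + 3 * (LINT t:J n i|lborel. \<bar>Rr K (Q t)\<bar> powr r))"
    proof -
      have "\<bar>Rr K c\<bar> powr r / real n \<le> 2 * (LINT t:J n i|lborel. \<bar>Rr K (Q t)\<bar> powr r)"
        unfolding c_def using half[OF _ i] K by simp
      then have "3 powr r * (\<bar>Rr K c\<bar> powr r / real n) \<le> 3 powr r * (2 * (LINT t:J n i|lborel. \<bar>Rr K (Q t)\<bar> powr r))"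
        by (intro mult_left_mono) auto
      then show ?thesis by (simp add: algebra_simps add_divide_distrib)
    qed
    finally show ?thesis unfolding c_def \<Delta>_def by (simp add: field_simps)
  qed
  have "cost n r (cv n) \<le> (\<Sum>i=1..n. 3 powr r * ((2 * K) powr (r - 1) * (P i - P (i - 1)) / real n + 3 * (LINT t:J n i|lborel. \<bar>Rr K (Q t)\<bar> powr r)))"
    unfolding cost_def by (rule sum_mono) (use per in auto)
  also have "\<dots> = 3 powr r * ((2 * K) powr (r - 1) / real n * (\<Sum>i=1..n. P i - P (i - 1)) + 3 * (\<Sum>i=1..n. LINT t:J n i|lborel. \<bar>Rr K (Q t)\<bar> powr r))"
    by (simp add: sum_distrib_left sum.distrib algebra_simps)
  also have "(\<Sum>i=1..n. P i - P (i - 1)) = 2 * K" by (subst telesc) (use n in \<open>simp add: P_def\<close>)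
  also have "(\<Sum>i=1..n. LINT t:J n i|lborel. \<bar>Rr K (Q t)\<bar> powr r) = (LINT t:{0<..<1}|lborel. \<bar>Rr K (Q t)\<bar> powr r)"
    by (rule split_int(2)[OF n, symmetric]) (use K J_sub J_borel in \<open>auto intro!: RQ_int\<close>)
  also have "(2 * K) powr (r - 1) / real n * (2 * K) = (2 * K) powr r / real n"
    using K by (simp add: powr_diff)
  finally show ?thesis .
qed

end



context QS begin

lemma cost_nonneg: "0 \<le> cost n p v"
  unfolding cost_def by (intro sum_nonneg sint_nonneg) auto

lemma tail_lim: "(\<lambda>K::nat. LINT t:{0<..<1}|lborel. \<bar>Rr (real K) (Q t)\<bar> powr r) \<longlonglongrightarrow> 0"
proof -
  let ?A = "{0<..<1::real}"
  have "(\<lambda>K. integral\<^sup>L lborel (\<lambda>t. indicator ?A t *\<^sub>R \<bar>Rr (real K) (Q t)\<bar> powr r)) \<longlonglongrightarrow> integral\<^sup>L lborel (\<lambda>t::real. 0::real)"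
  proof (rule Bochner_Integration.integral_dominated_convergence[where w="\<lambda>t. indicator ?A t *\<^sub>R \<bar>Q t\<bar> powr r"
      and s="\<lambda>K t. indicator ?A t *\<^sub>R \<bar>Rr (real K) (Q t)\<bar> powr r" and f="\<lambda>t. 0::real" and M=lborel])
    show "(\<lambda>t::real. 0::real) \<in> borel_measurable lborel" by simp
    show "(\<lambda>t. indicator ?A t *\<^sub>R \<bar>Rr (real K) (Q t)\<bar> powr r) \<in> borel_measurable lborel" for K
    proof -
      have "(\<lambda>t. \<bar>Rr (real K) (Q t)\<bar> powr r) \<in> borel_measurable (restrict_space lborel ?A)"
        using measurable_compose[OF Qm, of "\<lambda>u. \<bar>Rr (real K) u\<bar> powr r"] by measurable
      then have "set_borel_measurable lborel ?A (\<lambda>t. \<bar>Rr (real K) (Q t)\<bar> powr r)"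
        by (rule sbm) auto
      then show ?thesis unfolding set_borel_measurable_def .
    qed
    show "integrable lborel (\<lambda>t. indicator ?A t *\<^sub>R \<bar>Q t\<bar> powr r)"
      using intQ unfolding set_integrable_def .
    show "AE t in lborel. (\<lambda>K. indicator ?A t *\<^sub>R \<bar>Rr (real K) (Q t)\<bar> powr r) \<longlonglongrightarrow> 0"
    proof (rule AE_I2)
      fix t :: real
      show "(\<lambda>K. indicator ?A t *\<^sub>R \<bar>Rr (real K) (Q t)\<bar> powr r) \<longlonglongrightarrow> 0"
      proof (rule tendsto_eventually, unfold eventually_sequentially, intro exI allI impI)
        fix K assume "nat \<lceil>\<bar>Q t\<bar>\<rceil> \<le> K"
        then have "\<bar>Q t\<bar> \<le> real K" by linarith
        then have "Rr (real K) (Q t) = 0" using Rr_abs[of "real K" "Q t"] by simp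
        then show "indicator ?A t *\<^sub>R \<bar>Rr (real K) (Q t)\<bar> powr r = 0" by simp
      qed
    qed
    show "AE t in lborel. norm (indicator ?A t *\<^sub>R \<bar>Rr (real K) (Q t)\<bar> powr r) \<le> indicator ?A t *\<^sub>R \<bar>Q t\<bar> powr r" for K
    proof (rule AE_I2)
      fix t :: real
      have "\<bar>Rr (real K) (Q t)\<bar> powr r \<le> \<bar>Q t\<bar> powr r" using r1 Rr_le[of "real K" "Q t"] by (intro powr_mono2) auto
      then show "norm (indicator ?A t *\<^sub>R \<bar>Rr (real K) (Q t)\<bar> powr r) \<le> indicator ?A t *\<^sub>R \<bar>Q t\<bar> powr r"
        by (auto simp: indicator_def)
    qed
  qed
  then show ?thesis unfolding set_lebesgue_integral_def by simp
qed

lemma P2: "(\<lambda>n. cost n r (cv n)) \<longlonglongrightarrow> 0"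
proof (rule LIMSEQ_I)
  fix e :: real assume e: "0 < e"
  define L where "L K = (LINT t:{0<..<1}|lborel. \<bar>Rr K (Q t)\<bar> powr r)" for K
  have "e / (6 * 3 powr r) > 0" using e by simp
  from order_tendstoD(2)[OF tail_lim this]
  obtain K0 where hK: "\<And>K. K \<ge> K0 \<Longrightarrow> L (real K) < e / (6 * 3 powr r)"
    by (auto simp: eventually_sequentially L_def)
  define K where "K = real (max K0 1)"
  have Kp: "K > 0" by (simp add: K_def)
  have LK: "L K < e / (6 * 3 powr r)" using hK[of "max K0 1"] by (simp add: K_def)
  obtain N :: nat where N: "real N > 2 * 3 powr r * (2 * K) powr r / e" using reals_Archimedean2 by blast
  show "\<exists>no. \<forall>n\<ge>no. norm (cost n r (cv n) - 0) < e"
  proof (intro exI allI impI)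
    fix n assume nN: "max N 1 \<le> n"
    then have n: "1 \<le> n" by simp
    have np: "real n > 0" using n by simp
    have "real n > 2 * 3 powr r * (2 * K) powr r / e" using N nN by linarith
    then have "2 * 3 powr r * (2 * K) powr r < e * real n" using e by (simp add: field_simps)
    then have a: "3 powr r * ((2 * K) powr r / real n) < e / 2" using np by (simp add: field_simps)
    have b: "3 powr r * (3 * L K) < e / 2" using LK by (simp add: field_simps)
    have "cost n r (cv n) \<le> 3 powr r * ((2 * K) powr r / real n + 3 * L K)"
      using cost_bd[OF Kp n] by (simp add: L_def)
    also have "\<dots> = 3 powr r * ((2 * K) powr r / real n) + 3 powr r * (3 * L K)" by (simp only: distrib_left)
    also have "\<dots> < e" using a b by linarith
    finally show "norm (cost n r (cv n) - 0) < e" using cost_nonneg by simp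
  qed
qed

end



lemma quantile_mono:
  assumes M: "real_distribution M"
  shows "mono_on {0<..<1} (quantile M)"
proof (rule mono_onI)
  interpret real_distribution M by (rule M)
  fix t t' :: real assume t: "t \<in> {0<..<1}" and t': "t' \<in> {0<..<1}" and tt: "t \<le> t'"
  have cdf: "cdf_of M = cdf M" by (simp add: fun_eq_iff cdf_of_def cdf_def)
  have "eventually (\<lambda>x. cdf M x < t) at_bot"
    using order_tendstoD(2)[OF cdf_lim_at_bot, of t] t by simp
  then obtain N where "\<And>x. x \<le> N \<Longrightarrow> cdf M x < t" by (auto simp: eventually_at_bot_linorder)
  then have ne: "{x. cdf_of M x \<le> t} \<noteq> {}" using cdf by (auto intro!: exI[of _ N] less_imp_le)
  have "eventually (\<lambda>x. t' < cdf M x) at_top"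
    using order_tendstoD(1)[OF cdf_lim_at_top_prob, of t'] t' by simp
  then obtain B where B: "\<And>x. B \<le> x \<Longrightarrow> t' < cdf M x" by (auto simp: eventually_at_top_linorder)
  have bdd: "bdd_above {x. cdf_of M x \<le> t'}"
  proof (rule bdd_aboveI)
    fix x assume "x \<in> {x. cdf_of M x \<le> t'}"
    then show "x \<le> B" using B[of x] cdf by force
  qed
  have sub: "{x. cdf_of M x \<le> t} \<subseteq> {x. cdf_of M x \<le> t'}" using tt by auto
  show "quantile M t \<le> quantile M t'" unfolding quantile_def
    by (rule cSup_subset_mono[OF ne bdd sub])
qed

theorem corollary5:
  fixes r s :: real and M :: "real measure" and xs :: "nat \<Rightarrow> nat \<Rightarrow> real"
  assumes "r \<ge> 1"
    and "prob_space M" and "sets M = sets borel"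
    and "integrable M (\<lambda>x. \<bar>x\<bar> powr r)"
    and "1 \<le> s" and "s \<le> r"
    and "\<And>n. n \<ge> 1 \<Longrightarrow> xs n \<in> Xi n"
    and "\<And>n y. n \<ge> 1 \<Longrightarrow> y \<in> Xi n \<Longrightarrow>
           dist_r s (unif_emp n (xs n)) M \<le> dist_r s (unif_emp n y) M"
  shows "((\<lambda>n. dist_r r (unif_emp n (xs n)) M) \<longlonglongrightarrow> 0) \<and>
         ((\<lambda>n. dist_r r (unif_emp n (\<lambda>i. quantile M ((2 * real i - 1) / (2 * real n)))) M)
           \<longlonglongrightarrow> 0)"
proof -
  note r = assms(1) and s = assms(5,6) and xX = assms(7) and xmin = assms(8)
  have RD: "real_distribution M" using assms(2,3) by (simp add: real_distribution_def real_distribution_axioms_def)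
  define Q where "Q = quantile M"
  have mono: "mono_on {0<..<1} Q" unfolding Q_def by (rule quantile_mono[OF RD])
  define cq where "cq n = (\<lambda>i. quantile M ((2 * real i - 1) / (2 * real n)))" for n :: nat
  show ?thesis
  proof (cases "set_integrable lborel {0<..<1} (\<lambda>t. \<bar>Q t\<bar> powr r)")
    case False
    have z: "dist_r r (unif_emp n v) M = 0" if "1 \<le> n" "v \<in> Xi n" for n v
      unfolding dist_r_def using nonint_zero[OF mono r False that] r by (simp add: Q_def)
    have cqX: "cq n \<in> Xi n" for n
      unfolding Xi_def cq_def
    proof (intro CollectI allI impI)
      fix a a' :: nat assume a: "1 \<le> a" "a \<le> a'" "a' \<le> n"
      have "(2 * real a - 1) / (2 * real n) \<le> (2 * real a' - 1) / (2 * real n)"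
        using a by (intro divide_right_mono) auto
      then show "quantile M ((2 * real a - 1) / (2 * real n)) \<le> quantile M ((2 * real a' - 1) / (2 * real n))"
        using mono_onD[OF quantile_mono[OF RD], of "(2 * real a - 1) / (2 * real n)" "(2 * real a' - 1) / (2 * real n)"]
          mid_J(2)[of a n] mid_J(2)[of a' n] a by simp
    qed
    have "((\<lambda>n. dist_r r (unif_emp n (xs n)) M) \<longlonglongrightarrow> 0)"
    proof (rule tendsto_eventually, rule eventually_sequentiallyI[of 1])
      fix n :: nat assume "1 \<le> n" then show "dist_r r (unif_emp n (xs n)) M = 0" by (intro z xX)
    qed
    moreover have "((\<lambda>n. dist_r r (unif_emp n (cq n)) M) \<longlonglongrightarrow> 0)"
    proof (rule tendsto_eventually, rule eventually_sequentiallyI[of 1])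
      fix n :: nat assume "1 \<le> n" then show "dist_r r (unif_emp n (cq n)) M = 0" by (intro z cqX)
    qed
    ultimately show ?thesis unfolding cq_def by simp
  next
    case True
    interpret QS Q r by unfold_locales (use mono r True in auto)
    have cqe: "cq n = cv n" for n unfolding cv_def by (simp add: cq_def Q_def)
    have dist_eq: "dist_r p (unif_emp n v) M = cost n p v powr (1 / p)"
      if "1 \<le> n" "v \<in> Xi n" "0 < p" "p \<le> r" for n v p
      unfolding dist_r_def cost_def using bridge[OF that] by (simp add: Q_def)
    have sp: "0 < s" using s by simp
    have rp: "0 < r" using r by simp
    have minc: "cost n s (xs n) \<le> cost n s y" if n: "1 \<le> n" and y: "y \<in> Xi n" for n y
    proof (rule ccontr)
      assume "\<not> cost n s (xs n) \<le> cost n s y"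
      then have "cost n s y < cost n s (xs n)" by simp
      then have "cost n s y powr (1 / s) < cost n s (xs n) powr (1 / s)"
        using sp cost_nonneg by (intro powr_less_mono2) auto
      then show False using xmin[OF n y] dist_eq[OF n y sp s(2)] dist_eq[OF n xX[OF n] sp s(2)] by simp
    qed
    have cmp: "cost n r (xs n) \<le> 2 powr r * (bet r s + 1) * cost n r (cv n)" if n: "1 \<le> n" for n
      using cost_cmp[OF n s xX[OF n] minc[OF n]] by simp
    have P1: "(\<lambda>n. cost n r (xs n)) \<longlonglongrightarrow> 0"
    proof (rule tendsto_sandwich[where f="\<lambda>n. 0" and h="\<lambda>n. 2 powr r * (bet r s + 1) * cost n r (cv n)"])
      show "\<forall>\<^sub>F n in sequentially. 0 \<le> cost n r (xs n)" using cost_nonneg by simp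
      show "\<forall>\<^sub>F n in sequentially. cost n r (xs n) \<le> 2 powr r * (bet r s + 1) * cost n r (cv n)"
        using cmp by (auto simp: eventually_sequentially intro!: exI[of _ 1])
      show "(\<lambda>n. 2 powr r * (bet r s + 1) * cost n r (cv n)) \<longlonglongrightarrow> 0"
        using tendsto_mult_right_zero[OF P2] by simp
    qed simp
    have L1: "(\<lambda>n. cost n r (xs n) powr (1 / r)) \<longlonglongrightarrow> 0"
      by (rule tendsto_zero_powrI[OF P1, where b="1 / r"]) (use rp cost_nonneg in auto)
    have L2: "(\<lambda>n. cost n r (cv n) powr (1 / r)) \<longlonglongrightarrow> 0"
      by (rule tendsto_zero_powrI[OF P2, where b="1 / r"]) (use rp cost_nonneg in auto)
    have "(\<lambda>n. dist_r r (unif_emp n (xs n)) M) \<longlonglongrightarrow> 0"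
    proof (rule Lim_transform_eventually[OF L1])
      show "\<forall>\<^sub>F n in sequentially. cost n r (xs n) powr (1 / r) = dist_r r (unif_emp n (xs n)) M"
        using dist_eq[OF _ xX _ order.refl] rp by (auto simp: eventually_sequentially intro!: exI[of _ 1])
    qed
    moreover have "(\<lambda>n. dist_r r (unif_emp n (cq n)) M) \<longlonglongrightarrow> 0"
    proof (rule Lim_transform_eventually[OF L2])
      show "\<forall>\<^sub>F n in sequentially. cost n r (cv n) powr (1 / r) = dist_r r (unif_emp n (cq n)) M"
        using dist_eq[OF _ cv_Xi _ order.refl] rp unfolding cqe
        by (auto simp: eventually_sequentially intro!: exI[of _ 1])
    qed
    ultimately show ?thesis unfolding cq_def by simp
  qed
qed


end
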